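(* Let $R = \mathbb{Z} \times \mathbb{Z}$ with coordinatewise addition and multiplication $(a,b)\cdot(c,d) = (ac, ad+bc)$, and consider the template $(\mathbb{Z}^+ \times \mathbb{N}, \mathbb{N}^2, \mathbb{N}^2)$ in $R$. Let $n \ge 2$ and let $(\alpha_1, \dots, \alpha_n)$ be a list of elements $\alpha_i = (a_i, b_i) \in \mathbb{Z}^+ \times \mathbb{N}$ with $\gcd(a_1, \dots, a_n) = 1$. Then $\mathrm{Frob}(\alpha_1, \dots, \alpha_n)$ is nonempty if and only if $b_i = 0$ for at least one $i$.
   Context: $\mathbb{N}$ denotes the nonnegative integers, $\mathbb{Z}^+ = \mathbb{N}\setminus\{0\}$. For the template above, $MN(\alpha_1, \dots, \alpha_n) = \{\sum_{i=1}^n \alpha_i \lambda_i : \lambda_i \in \mathbb{N}^2\}$ (product in $R$), and $\mathrm{Frob}(\alpha_1, \dots, \alpha_n) = \{w \in R : w + \mathbb{N}^2 \subseteq MN(\alpha_1, \dots, \alpha_n)\}$, where $w + \mathbb{N}^2 = \{w+u : u \in \mathbb{N}^2\}$. *)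

theory Defs
  imports Main
begin

definition radd :: "int \<times> int \<Rightarrow> int \<times> int \<Rightarrow> int \<times> int" where
  "radd x y = (fst x + fst y, snd x + snd y)"

definition rmul :: "int \<times> int \<Rightarrow> int \<times> int \<Rightarrow> int \<times> int" where
  "rmul x y = (fst x * fst y, fst x * snd y + snd x * fst y)"

definition N2 :: "(int \<times> int) set" where
  "N2 = {p. fst p \<ge> 0 \<and> snd p \<ge> 0}"

definition rlincomb :: "(int \<times> int) list \<Rightarrow> (nat \<Rightarrow> int \<times> int) \<Rightarrow> int \<times> int" where
  "rlincomb as lam =
     ((\<Sum>i<length as. fst (rmul (as ! i) (lam i))),
      (\<Sum>i<length as. snd (rmul (as ! i) (lam i))))"

definition MN :: "(int \<times> int) list \<Rightarrow> (int \<times> int) set" where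
  "MN as = {rlincomb as lam | lam. \<forall>i<length as. lam i \<in> N2}"

definition Frob :: "(int \<times> int) list \<Rightarrow> (int \<times> int) set" where
  "Frob as = {w. \<forall>u\<in>N2. radd w u \<in> MN as}"

end

theory Submission
  imports Defs
begin

lemma bezout_list:
  fixes xs :: "int list"
  shows "\<exists>c. (\<Sum>i<length xs. c i * xs ! i) = Gcd (set xs)"
proof (induction xs)
  case Nil
  then show ?case by simp
next
  case (Cons x xs)
  then obtain c where c: "(\<Sum>i<length xs. c i * xs ! i) = Gcd (set xs)" by blast
  obtain u v where uv: "u * x + v * Gcd (set xs) = gcd x (Gcd (set xs))"
    using bezout_int by blast
  define c' where "c' = (\<lambda>i. if i = 0 then u else v * c (i - 1))"
  have "(\<Sum>i<length (x#xs). c' i * (x#xs) ! i) = u * x + (\<Sum>i<length xs. v * c i * xs ! i)"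
    unfolding length_Cons sum.lessThan_Suc_shift by (simp add: c'_def)
  also have "\<dots> = u * x + v * Gcd (set xs)"
    by (simp add: c[symmetric] sum_distrib_left mult.assoc)
  also have "\<dots> = Gcd (set (x#xs))" using uv by simp
  finally show ?case by blast
qed

lemma rep:
  fixes a c :: "nat \<Rightarrow> int" and Z :: int
  assumes k: "k < n" and ak: "a k > 0" and apos: "\<forall>i<n. a i \<ge> 0"
    and bez: "(\<Sum>i<n. c i * a i) = 1"
    and Z: "Z \<ge> a k * (\<Sum>i<n. a i)"
  shows "\<exists>x. (\<forall>i<n. x i \<ge> 0) \<and> (\<forall>i<n. i \<noteq> k \<longrightarrow> x i < a k) \<and> (\<Sum>i<n. a i * x i) = Z"
proof -
  define S where "S = {..<n} - {k}"
  have finS: "finite S" by (simp add: S_def)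
  define d where "d i = (Z * c i) mod a k" for i
  define x where "x i = (if i = k then Z * c k + (\<Sum>j\<in>S. (Z * c j div a k) * a j) else d i)" for i
  have d0: "0 \<le> d i" "d i < a k" for i using ak by (auto simp: d_def)
  have split: "(\<Sum>i<n. f i) = f k + (\<Sum>i\<in>S. f i)" for f :: "nat \<Rightarrow> int"
    using k by (simp add: S_def sum.remove)
  have sumx: "(\<Sum>i<n. a i * x i) = a k * x k + (\<Sum>i\<in>S. a i * d i)"
    by (subst split) (auto simp: x_def S_def intro!: sum.cong)
  have "Z = (\<Sum>i<n. a i * (Z * c i))"
    using bez by (simp add: sum_distrib_left[symmetric] mult.commute mult.left_commute)
  also have "\<dots> = a k * (Z * c k) + (\<Sum>i\<in>S. a i * (Z * c i))" by (rule split)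
  also have "(\<Sum>i\<in>S. a i * (Z * c i)) = (\<Sum>i\<in>S. a i * d i + a k * ((Z * c i div a k) * a i))"
  proof (rule sum.cong)
    fix i assume "i \<in> S"
    have e: "Z * c i = d i + a k * (Z * c i div a k)" unfolding d_def by simp
    have "a i * (Z * c i) = a i * (d i + a k * (Z * c i div a k))" using e by simp
    then show "a i * (Z * c i) = a i * d i + a k * ((Z * c i div a k) * a i)"
      by (simp add: algebra_simps)
  qed simp
  also have "\<dots> = (\<Sum>i\<in>S. a i * d i) + a k * (\<Sum>i\<in>S. (Z * c i div a k) * a i)"
    by (simp add: sum.distrib sum_distrib_left)
  finally have Zeq: "Z = a k * x k + (\<Sum>i\<in>S. a i * d i)"
    by (simp add: x_def algebra_simps)
  have "(\<Sum>i\<in>S. a i * d i) \<le> (\<Sum>i\<in>S. a i * a k)"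
    using d0 apos by (intro sum_mono) (auto simp: S_def intro: mult_left_mono less_imp_le)
  also have "\<dots> \<le> (\<Sum>i<n. a i * a k)"
    using apos ak by (intro sum_mono2) (auto simp: S_def)
  also have "\<dots> = a k * (\<Sum>i<n. a i)" by (simp add: sum_distrib_left mult.commute)
  finally have "a k * x k \<ge> 0" using Zeq Z by linarith
  then have xk: "x k \<ge> 0" using ak by (simp add: zero_le_mult_iff)
  show ?thesis
  proof (intro exI conjI allI impI)
    fix i assume "i < n" then show "0 \<le> x i" using xk d0 by (cases "i = k") (auto simp: x_def)
  next
    fix i assume "i < n" "i \<noteq> k" then show "x i < a k" using d0 by (simp add: x_def)
  next
    show "(\<Sum>i<n. a i * x i) = Z" using sumx Zeq by simp
  qed
qed

lemma rlincomb_eq: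
  "rlincomb as lam = ((\<Sum>i<length as. fst (as!i) * fst (lam i)),
     (\<Sum>i<length as. fst (as!i) * snd (lam i) + snd (as!i) * fst (lam i)))"
  by (simp add: rlincomb_def rmul_def)

theorem corollary4p1:
  fixes as :: "(int \<times> int) list"
  assumes "length as \<ge> 2"
    and "\<forall>\<alpha>\<in>set as. fst \<alpha> > 0 \<and> snd \<alpha> \<ge> 0"
    and "Gcd (fst ` set as) = 1"
  shows "Frob as \<noteq> {} \<longleftrightarrow> (\<exists>\<alpha>\<in>set as. snd \<alpha> = 0)"
proof -
  define n where "n = length as"
  define a where "a i = fst (as ! i)" for i
  define b where "b i = snd (as ! i)" for i
  have apos: "a i > 0" "b i \<ge> 0" if "i < n" for i
    using assms(2) that nth_mem[of i as] by (auto simp: a_def b_def n_def)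
  show ?thesis
  proof
    assume "Frob as \<noteq> {}"
    then obtain w where w: "w \<in> Frob as" by blast
    show "\<exists>\<alpha>\<in>set as. snd \<alpha> = 0"
    proof (rule ccontr)
      assume nb: "\<not> ?thesis"
      have b1: "b i \<ge> 1" if "i < n" for i
      proof -
        have m: "as ! i \<in> set as" using that by (simp add: n_def)
        then have "snd (as ! i) \<noteq> 0" using nb by blast
        moreover have "snd (as ! i) \<ge> 0" using m assms(2) by blast
        ultimately show ?thesis by (simp add: b_def)
      qed
      define A where "A = (\<Sum>i<n. a i)"
      have A0: "A \<ge> 0" unfolding A_def using apos by (intro sum_nonneg) (auto intro: less_imp_le)
      have aA: "a i \<le> A" if "i < n" for i
        unfolding A_def using apos that by (intro member_le_sum) (auto intro: less_imp_le)
      define u where "u = (A * \<bar>snd w\<bar> + \<bar>fst w\<bar> + 1, 0::int)"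
      have "u \<in> N2" using A0 by (simp add: u_def N2_def)
      then have "radd w u \<in> MN as" using w by (simp add: Frob_def)
      then obtain lam where lam: "\<forall>i<n. lam i \<in> N2" and eq: "rlincomb as lam = radd w u"
        by (auto simp: MN_def n_def)
      have lx: "fst (lam i) \<ge> 0" "snd (lam i) \<ge> 0" if "i < n" for i
        using lam that by (auto simp: N2_def)
      have X: "(\<Sum>i<n. a i * fst (lam i)) = A * \<bar>snd w\<bar> + \<bar>fst w\<bar> + 1 + fst w"
        using eq by (simp add: rlincomb_eq radd_def u_def a_def n_def)
      have Y: "(\<Sum>i<n. a i * snd (lam i) + b i * fst (lam i)) = snd w"
        using eq by (simp add: rlincomb_eq radd_def u_def a_def b_def n_def)
      have "(\<Sum>i<n. a i * fst (lam i)) \<le> (\<Sum>i<n. A * fst (lam i))"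
        using aA lx by (intro sum_mono mult_right_mono) auto
      also have "\<dots> = A * (\<Sum>i<n. fst (lam i))" by (simp add: sum_distrib_left)
      also have "(\<Sum>i<n. fst (lam i)) \<le> (\<Sum>i<n. a i * snd (lam i) + b i * fst (lam i))"
      proof (rule sum_mono)
        fix i assume "i \<in> {..<n}"
        then have i: "i < n" by simp
        have "a i * snd (lam i) \<ge> 0" using apos[OF i] lx[OF i] by simp
        moreover have "b i * fst (lam i) \<ge> 1 * fst (lam i)"
          using b1[OF i] lx[OF i] by (intro mult_right_mono) auto
        ultimately show "fst (lam i) \<le> a i * snd (lam i) + b i * fst (lam i)" by simp
      qed
      then have "A * (\<Sum>i<n. fst (lam i)) \<le> A * snd w" using Y A0 by (simp add: mult_left_mono)
      finally have "A * \<bar>snd w\<bar> + \<bar>fst w\<bar> + 1 + fst w \<le> A * snd w" using X by simp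
      moreover have "A * snd w \<le> A * \<bar>snd w\<bar>" using A0 by (simp add: mult_left_mono)
      ultimately show False by linarith
    qed
  next
    assume "\<exists>\<alpha>\<in>set as. snd \<alpha> = 0"
    then obtain k where k: "k < n" "b k = 0" by (auto simp: in_set_conv_nth b_def n_def)
    obtain c where c0: "(\<Sum>i<length (map fst as). c i * map fst as ! i) = Gcd (set (map fst as))"
      using bezout_list by blast
    have bez: "(\<Sum>i<n. c i * a i) = 1" using c0 assms(3) by (simp add: a_def n_def)
    have ak: "a k > 0" using apos k by simp
    have ap: "\<forall>i<n. a i \<ge> 0" using apos by (auto intro: less_imp_le)
    define X0 where "X0 = a k * (\<Sum>i<n. a i)"
    define B where "B = (\<Sum>i<n. b i * a k)"
    have "(X0, X0 + B) \<in> Frob as"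
      unfolding Frob_def
    proof (intro CollectI ballI)
      fix u assume "u \<in> N2"
      then have u: "fst u \<ge> 0" "snd u \<ge> 0" by (auto simp: N2_def)
      obtain x where x: "\<forall>i<n. x i \<ge> 0" "\<forall>i<n. i \<noteq> k \<longrightarrow> x i < a k"
          "(\<Sum>i<n. a i * x i) = X0 + fst u"
        using rep[OF k(1) ak ap bez, of "X0 + fst u"] u by (auto simp: X0_def)
      have "(\<Sum>i<n. b i * x i) \<le> B" unfolding B_def
      proof (rule sum_mono)
        fix i assume "i \<in> {..<n}"
        then have i: "i < n" by simp
        show "b i * x i \<le> b i * a k"
        proof (cases "i = k")
          case True then show ?thesis using k ak by simp
        next
          case False then show ?thesis using x(2) i apos[OF i]
            by (intro mult_left_mono) auto
        qed
      qed
      then obtain y where y: "\<forall>i<n. y i \<ge> 0"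
          "(\<Sum>i<n. a i * y i) = X0 + B + snd u - (\<Sum>i<n. b i * x i)"
        using rep[OF k(1) ak ap bez, of "X0 + B + snd u - (\<Sum>i<n. b i * x i)"] u
        by (auto simp: X0_def)
      define lam where "lam i = (x i, y i)" for i
      have "rlincomb as lam = radd (X0, X0 + B) u"
        using x(3) y(2)
        by (simp add: rlincomb_eq radd_def lam_def a_def[symmetric] b_def[symmetric]
            n_def[symmetric] sum.distrib)
      moreover have "\<forall>i<length as. lam i \<in> N2"
        using x(1) y(1) by (simp add: lam_def N2_def n_def)
      ultimately show "radd (X0, X0 + B) u \<in> MN as" unfolding MN_def
        apply -
        apply (rule CollectI)
        apply (rule exI[of _ lam])
        apply (rule conjI)
        apply (rule sym)
        apply assumption
        apply assumption done
    qed
    then show "Frob as \<noteq> {}" by blast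
  qed
qed

end
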